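(* Let $T>0$, $\mu>0$ and $f\in L^2(0,T)$. For $t\in[0,T]$ set $\mathsf{C}(t,f):=\int_0^t\cos(\sqrt{\mu}(t-s))f(s)\,ds$ and $\mathsf{S}(t,f):=\int_0^t\sin(\sqrt{\mu}(t-s))f(s)\,ds$. Then for all $w\in H^1_{0,}(0,T)$, \[ \int_0^T f(t)\,(\mathsf{T}_\mu w)(t)\,dt = \int_0^T\big[w'(t)\,\mathsf{C}(t,f)+\sqrt{\mu}\,w(t)\,\mathsf{S}(t,f)\big]\,dt, \] and \[ \int_0^T\big[\mathsf{C}(t,f)^2+\mathsf{S}(t,f)^2\big]\,dt\le \frac{T^2}{2}\|f\|_{L^2(0,T)}^2 . \] Consequently $\int_0^T f\,\mathsf{T}_\mu w\,dt\le \frac{T}{\sqrt2}\|f\|_{L^2(0,T)}\|w\|_{H^1_\mu}$ for all $w\in H^1_{0,}(0,T)$, and the unique $u\in H^1_{0,}(0,T)$ with $b_\mu(u,\mathsf{T}_\mu w)=\int_0^T f\,\mathsf{T}_\mu w\,dt$ for all $w\in H^1_{0,}(0,T)$ satisfies $\|u\|_{H^1_\mu}\le \frac{T}{\sqrt2}\|f\|_{L^2(0,T)}$.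
   Context: All functions are real valued. $H^1_{0,}(0,T):=\{v\in H^1(0,T): v(0)=0\}$. $b_\mu(u,v):=\int_0^T[-u'(t)v'(t)+\mu u(t)v(t)]\,dt$. $\|w\|_{H^1_\mu}:=(\|w'\|_{L^2(0,T)}^2+\mu\|w\|_{L^2(0,T)}^2)^{1/2}$. For $w\in H^1_{0,}(0,T)$, \[ (\mathsf{T}_\mu w)(t) := \int_t^T\Big[\cos(\sqrt{\mu}(t-s))\,w'(s) -\sqrt{\mu}\,\sin(\sqrt{\mu}(t-s))\,w(s)\Big]\, ds . \] *)

theory Defs
  imports "HOL-Analysis.Analysis"
begin

definition L2_on :: "real \<Rightarrow> (real \<Rightarrow> real) \<Rightarrow> bool" where
  "L2_on T f \<longleftrightarrow> set_borel_measurable lborel {0..T} f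
      \<and> set_integrable lborel {0..T} (\<lambda>t. (f t)^2)"

definition L2_norm :: "real \<Rightarrow> (real \<Rightarrow> real) \<Rightarrow> real" where
  "L2_norm T f = sqrt (LBINT t=0..T. (f t)^2)"

text \<open>v belongs to H1(0,T) with (weak) derivative v': v' in L2(0,T) and v is
  (the absolutely continuous representative) v(t) = v(0) + integral of v' over [0,t].\<close>
definition H1_deriv :: "real \<Rightarrow> (real \<Rightarrow> real) \<Rightarrow> (real \<Rightarrow> real) \<Rightarrow> bool" where
  "H1_deriv T v v' \<longleftrightarrow> L2_on T v' \<and> (\<forall>t\<in>{0..T}. v t = v 0 + (LBINT s=0..t. v' s))"

definition H10 :: "real \<Rightarrow> (real \<Rightarrow> real) \<Rightarrow> (real \<Rightarrow> real) \<Rightarrow> bool" where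
  "H10 T w w' \<longleftrightarrow> H1_deriv T w w' \<and> w 0 = 0"

definition H1mu_norm :: "real \<Rightarrow> real \<Rightarrow> (real \<Rightarrow> real) \<Rightarrow> (real \<Rightarrow> real) \<Rightarrow> real" where
  "H1mu_norm T \<mu> w w' = sqrt ((LBINT t=0..T. (w' t)^2) + \<mu> * (LBINT t=0..T. (w t)^2))"

definition b_mu :: "real \<Rightarrow> real \<Rightarrow> (real \<Rightarrow> real) \<Rightarrow> (real \<Rightarrow> real)
    \<Rightarrow> (real \<Rightarrow> real) \<Rightarrow> (real \<Rightarrow> real) \<Rightarrow> real" where
  "b_mu T \<mu> u u' v v' = (LBINT t=0..T. - u' t * v' t + \<mu> * u t * v t)"

definition T_mu :: "real \<Rightarrow> real \<Rightarrow> (real \<Rightarrow> real) \<Rightarrow> (real \<Rightarrow> real) \<Rightarrow> real \<Rightarrow> real" where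
  "T_mu T \<mu> w w' t = (LBINT s=t..T. cos (sqrt \<mu> * (t - s)) * w' s
                                    - sqrt \<mu> * sin (sqrt \<mu> * (t - s)) * w s)"

definition Cf :: "real \<Rightarrow> (real \<Rightarrow> real) \<Rightarrow> real \<Rightarrow> real" where
  "Cf \<mu> f t = (LBINT s=0..t. cos (sqrt \<mu> * (t - s)) * f s)"

definition Sf :: "real \<Rightarrow> (real \<Rightarrow> real) \<Rightarrow> real \<Rightarrow> real" where
  "Sf \<mu> f t = (LBINT s=0..t. sin (sqrt \<mu> * (t - s)) * f s)"

end

theory Submission
  imports Defs
begin


lemma abs_le_1_sq: "\<bar>y::real\<bar> \<le> 1 + y^2"
proof -
  have "0 \<le> (\<bar>y\<bar> - 1)^2" by simp
  hence "2*\<bar>y\<bar> \<le> \<bar>y\<bar>^2 + 1" by (simp add: power2_eq_square algebra_simps)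
  thus ?thesis by (simp add: power2_abs)
qed

lemma abs_mult_le_sq: "\<bar>(x::real) * y\<bar> \<le> x^2 + y^2"
proof -
  have "0 \<le> (\<bar>x\<bar> - \<bar>y\<bar>)^2" by simp
  hence "2*(\<bar>x\<bar>*\<bar>y\<bar>) \<le> \<bar>x\<bar>^2 + \<bar>y\<bar>^2" by (simp add: power2_eq_square algebra_simps)
  moreover have "0 \<le> \<bar>x\<bar>*\<bar>y\<bar>" by simp
  moreover have "\<bar>x\<bar>^2 = x^2" "\<bar>y\<bar>^2 = y^2" by simp_all
  ultimately show ?thesis unfolding abs_mult by linarith
qed

lemma sbm_lborel_iff: "set_borel_measurable lborel A f = set_borel_measurable borel A f"
  unfolding set_borel_measurable_def by simp

lemma set_integrable_sbm:
  fixes f :: "real \<Rightarrow> real"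
  shows "set_integrable lborel A f \<Longrightarrow> set_borel_measurable lborel A f"
  unfolding set_integrable_def set_borel_measurable_def by (rule borel_measurable_integrable)

lemma sbm_mult:
  fixes f g :: "real \<Rightarrow> real"
  assumes "set_borel_measurable lborel A f" "set_borel_measurable lborel A g"
  shows "set_borel_measurable lborel A (\<lambda>t. f t * g t)"
proof -
  have "(\<lambda>x. indicator A x *\<^sub>R (f x * g x)) = (\<lambda>x. (indicator A x *\<^sub>R f x) * (indicator A x *\<^sub>R g x))"
    by (auto simp: indicator_def fun_eq_iff)
  thus ?thesis using assms unfolding set_borel_measurable_def by simp
qed

lemma sbm_cont:
  fixes g :: "real \<Rightarrow> real"
  assumes "continuous_on {a..b} g"
  shows "set_borel_measurable lborel {a..b} g"
  unfolding sbm_lborel_iff by (rule set_measurable_continuous_on) (auto simp: assms)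

lemma sq_int_imp_int:
  fixes f :: "real \<Rightarrow> real"
  assumes "set_borel_measurable lborel {a..b} f" "set_integrable lborel {a..b} (\<lambda>t. (f t)^2)"
  shows "set_integrable lborel {a..b} f"
proof (rule set_integrable_bound[OF _ assms(1)])
  show "set_integrable lborel {a..b} (\<lambda>t. 1 + (f t)^2)"
    using assms(2) borel_integrable_atLeastAtMost'[of a b "\<lambda>_. 1::real"] by auto
  show "AE x in lborel. x \<in> {a..b} \<longrightarrow> norm (f x) \<le> norm (1 + (f x)\<^sup>2)"
    using abs_le_1_sq by (auto intro!: AE_I2)
qed

lemma sq_int_mult:
  fixes f g :: "real \<Rightarrow> real"
  assumes "set_borel_measurable lborel A f" "set_integrable lborel A (\<lambda>t. (f t)^2)"
    "set_borel_measurable lborel A g" "set_integrable lborel A (\<lambda>t. (g t)^2)"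
  shows "set_integrable lborel A (\<lambda>t. f t * g t)"
proof (rule set_integrable_bound[OF _ sbm_mult[OF assms(1,3)]])
  show "set_integrable lborel A (\<lambda>t. (f t)^2 + (g t)^2)"
    using assms by auto
  show "AE x in lborel. x \<in> A \<longrightarrow> norm (f x * g x) \<le> norm ((f x)\<^sup>2 + (g x)^2)"
    by (auto intro!: AE_I2) (smt (verit) zero_le_power2 abs_mult_le_sq)
qed

lemma set_integrable_mult_cont:
  fixes f g :: "real \<Rightarrow> real"
  assumes f: "set_integrable lborel {a..b} f" and g: "continuous_on {a..b} g"
  shows "set_integrable lborel {a..b} (\<lambda>t. g t * f t)"
proof -
  have "bounded (g ` {a..b})"
    using compact_imp_bounded[OF compact_continuous_image[OF g compact_Icc]] .
  then obtain B where "\<forall>y\<in>g ` {a..b}. norm y \<le> B" unfolding bounded_iff by blast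
  hence B: "\<And>t. t \<in> {a..b} \<Longrightarrow> norm (g t) \<le> B" by blast
  show ?thesis
  proof (rule set_integrable_bound[OF _ sbm_mult[OF sbm_cont[OF g] set_integrable_sbm[OF f]]])
    show "set_integrable lborel {a..b} (\<lambda>t. B * f t)" using f by auto
    show "AE x in lborel. x \<in> {a..b} \<longrightarrow> norm (g x * f x) \<le> norm (B * f x)"
    proof (intro AE_I2 impI)
      fix x assume x: "x \<in> {a..b}"
      have "norm (g x * f x) = norm (g x) * norm (f x)" by (simp add: abs_mult)
      also have "\<dots> \<le> B * norm (f x)" using B[OF x] by (simp add: mult_right_mono)
      also have "\<dots> \<le> norm (B * f x)" using abs_ge_self[of B] by (simp add: abs_mult mult_right_mono)
      finally show "norm (g x * f x) \<le> norm (B * f x)" .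
    qed
  qed
qed

lemma LBINT_eq_integral:
  fixes f :: "real \<Rightarrow> real"
  assumes "set_integrable lborel {a..b} f" "a \<le> t" "t \<le> b"
  shows "(LBINT s=a..t. f s) = integral {a..t} f"
proof -
  have "set_integrable lborel {a..t} f"
    by (rule set_integrable_subset[OF assms(1)]) (use assms in auto)
  thus ?thesis using assms by (simp add: interval_integral_Icc set_borel_integral_eq_integral(2))
qed

lemma cont_indef:
  fixes f :: "real \<Rightarrow> real"
  assumes "set_integrable lborel {a..b} f"
  shows "continuous_on {a..b} (\<lambda>t. LBINT s=a..t. f s)"
proof -
  have "continuous_on {a..b} (\<lambda>t. integral {a..t} f)"
    by (rule indefinite_integral_continuous_1) (rule set_borel_integral_eq_integral(1)[OF assms])
  thus ?thesis by (rule continuous_on_cong[THEN iffD1, rotated 2]) (auto simp: LBINT_eq_integral[OF assms])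
qed

lemma tri_fubini:
  fixes g h :: "real \<Rightarrow> real"
  assumes g: "integrable lborel g" and h: "integrable lborel h"
  shows "integrable lborel (\<lambda>t. h t * (LINT s|lborel. (if s \<le> t then g s else 0)))"
   and "integrable lborel (\<lambda>s. g s * (LINT t|lborel. (if t < s then h t else 0)))"
   and "(LINT s|lborel. g s) * (LINT t|lborel. h t) =
          (LINT t|lborel. h t * (LINT s|lborel. (if s \<le> t then g s else 0)))
        + (LINT s|lborel. g s * (LINT t|lborel. (if t < s then h t else 0)))"
proof -
  have gm[measurable]: "g \<in> borel_measurable borel" using borel_measurable_integrable[OF g] by simp
  have hm[measurable]: "h \<in> borel_measurable borel" using borel_measurable_integrable[OF h] by simp
  have P: "integrable (lborel \<Otimes>\<^sub>M lborel) (\<lambda>(t,s). h t * g s)"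
  proof (rule lborel_pair.Fubini_integrable)
    show "(\<lambda>(t,s). h t * g s) \<in> borel_measurable (lborel \<Otimes>\<^sub>M lborel)" by measurable
    have "(\<lambda>t. LINT s|lborel. norm (case (t, s) of (t, s) \<Rightarrow> h t * g s))
        = (\<lambda>t. \<bar>h t\<bar> * (LINT s|lborel. \<bar>g s\<bar>))" by (simp add: abs_mult)
    moreover have "integrable lborel (\<lambda>t. \<bar>h t\<bar> * (LINT s|lborel. \<bar>g s\<bar>))"
      using h by (intro integrable_mult_left) simp
    ultimately show "integrable lborel (\<lambda>t. LINT s|lborel. norm (case (t, s) of (t, s) \<Rightarrow> h t * g s))"
      by simp
    show "AE t in lborel. integrable lborel (\<lambda>s. case (t, s) of (t, s) \<Rightarrow> h t * g s)"
      using g by simp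
  qed
  define F1 where "F1 = (\<lambda>(t::real,s::real). if s \<le> t then h t * g s else 0)"
  define F2 where "F2 = (\<lambda>(t::real,s::real). if s \<le> t then 0 else h t * g s)"
  have F1m[measurable]: "F1 \<in> borel_measurable (lborel \<Otimes>\<^sub>M lborel)" unfolding F1_def by measurable
  have F2m[measurable]: "F2 \<in> borel_measurable (lborel \<Otimes>\<^sub>M lborel)" unfolding F2_def by measurable
  have F1i: "integrable (lborel \<Otimes>\<^sub>M lborel) F1"
    by (rule Bochner_Integration.integrable_bound[OF P F1m]) (auto simp: F1_def)
  have F2i: "integrable (lborel \<Otimes>\<^sub>M lborel) F2"
    by (rule Bochner_Integration.integrable_bound[OF P F2m]) (auto simp: F2_def)
  have sum: "integral\<^sup>L (lborel \<Otimes>\<^sub>M lborel) (\<lambda>(t,s). h t * g s)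
      = integral\<^sup>L (lborel \<Otimes>\<^sub>M lborel) F1 + integral\<^sup>L (lborel \<Otimes>\<^sub>M lborel) F2"
  proof -
    have "(\<lambda>(t,s). h t * g s) = (\<lambda>x. F1 x + F2 x)" by (auto simp: F1_def F2_def fun_eq_iff)
    thus ?thesis using F1i F2i by simp
  qed
  have eP: "integral\<^sup>L (lborel \<Otimes>\<^sub>M lborel) (\<lambda>(t,s). h t * g s) = (LINT s|lborel. g s) * (LINT t|lborel. h t)"
    using lborel_pair.integral_fst[of "\<lambda>t s. h t * g s", OF P] by (simp add: mult.commute)
  have e1: "\<And>t. (LINT s|lborel. F1 (t, s)) = h t * (LINT s|lborel. (if s \<le> t then g s else 0))"
  proof -
    fix t
    have "(\<lambda>s. F1 (t, s)) = (\<lambda>s. h t * (if s \<le> t then g s else 0))" by (auto simp: F1_def)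
    thus "(LINT s|lborel. F1 (t, s)) = h t * (LINT s|lborel. (if s \<le> t then g s else 0))" by simp
  qed
  have e2: "\<And>s. (LINT t|lborel. F2 (t, s)) = g s * (LINT t|lborel. (if t < s then h t else 0))"
  proof -
    fix s
    have "(\<lambda>t. F2 (t, s)) = (\<lambda>t. g s * (if t < s then h t else 0))" by (auto simp: F2_def)
    thus "(LINT t|lborel. F2 (t, s)) = g s * (LINT t|lborel. (if t < s then h t else 0))" by simp
  qed
  show I1: "integrable lborel (\<lambda>t. h t * (LINT s|lborel. (if s \<le> t then g s else 0)))"
    using lborel_pair.integrable_fst'[OF F1i] by (simp add: e1)
  have F2i': "integrable (lborel \<Otimes>\<^sub>M lborel) (case_prod (\<lambda>t s. F2 (t,s)))" using F2i by simp
  show I2: "integrable lborel (\<lambda>s. g s * (LINT t|lborel. (if t < s then h t else 0)))"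
    using lborel_pair.integrable_snd[OF F2i'] by (simp add: e2)
  have i1: "integral\<^sup>L (lborel \<Otimes>\<^sub>M lborel) F1 = (LINT t|lborel. h t * (LINT s|lborel. (if s \<le> t then g s else 0)))"
    using lborel_pair.integral_fst'[OF F1i] by (simp add: e1)
  have i2: "integral\<^sup>L (lborel \<Otimes>\<^sub>M lborel) F2 = (LINT s|lborel. g s * (LINT t|lborel. (if t < s then h t else 0)))"
    using lborel_pair.integral_snd[OF F2i'] by (simp add: e2)
  show "(LINT s|lborel. g s) * (LINT t|lborel. h t) =
          (LINT t|lborel. h t * (LINT s|lborel. (if s \<le> t then g s else 0)))
        + (LINT s|lborel. g s * (LINT t|lborel. (if t < s then h t else 0)))"
    using sum eP i1 i2 by simp
qed

lemma LBINT_Icc0: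
  fixes f :: "real \<Rightarrow> real" and x :: real
  assumes "0 \<le> x"
  shows "(LBINT t=0..x. f t) = (LINT t:{0..x}|lborel. f t)"
  using assms interval_integral_Icc[of 0 x f] by (simp add: zero_ereal_def)

lemma LBINT_as_LINT:
  fixes g :: "real \<Rightarrow> real" and t :: real
  assumes "0 \<le> t"
  shows "(LBINT s=0..t. g s) = (LINT s|lborel. indicator {0..t} s * g s)"
  using assms interval_integral_Icc[of 0 t g] by (simp add: zero_ereal_def set_lebesgue_integral_def)

lemma LBINT_as_LINT':
  fixes g :: "real \<Rightarrow> real" and t :: real
  assumes "0 \<le> t"
  shows "(LBINT s=0..t. g s) = (LINT s|lborel. indicator {0..<t} s * g s)"
  using assms interval_integral_Ico[of 0 t g] by (simp add: zero_ereal_def set_lebesgue_integral_def)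

lemma prod_rule_basic:
  fixes g h :: "real \<Rightarrow> real"
  assumes x: "0 \<le> x" and g: "set_integrable lborel {0..x} g" and h: "set_integrable lborel {0..x} h"
  shows "set_integrable lborel {0..x} (\<lambda>t. h t * (LBINT s=0..t. g s))"
    and "set_integrable lborel {0..x} (\<lambda>t. g t * (LBINT s=0..t. h s))"
    and "(LBINT s=0..x. g s) * (LBINT s=0..x. h s)
          = (LBINT t=0..x. h t * (LBINT s=0..t. g s) + g t * (LBINT s=0..t. h s))"
proof -
  define g0 where "g0 = (\<lambda>s. indicator {0..x} s * g s)"
  define h0 where "h0 = (\<lambda>s. indicator {0..x} s * h s)"
  have g0: "integrable lborel g0" using g by (simp add: set_integrable_def g0_def)
  have h0: "integrable lborel h0" using h by (simp add: set_integrable_def h0_def)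
  note F = tri_fubini[OF g0 h0]
  have e1: "h0 t * (LINT s|lborel. (if s \<le> t then g0 s else 0))
      = indicator {0..x} t * (h t * (LBINT s=0..t. g s))" for t
  proof (cases "t \<in> {0..x}")
    case True
    have "(\<lambda>s. if s \<le> t then g0 s else 0) = (\<lambda>s. indicator {0..t} s * g s)"
      using True by (auto simp: g0_def fun_eq_iff indicator_def)
    thus ?thesis using True by (simp add: LBINT_as_LINT h0_def)
  qed (simp add: h0_def)
  have e2: "g0 s * (LINT t|lborel. (if t < s then h0 t else 0))
      = indicator {0..x} s * (g s * (LBINT t=0..s. h t))" for s
  proof (cases "s \<in> {0..x}")
    case True
    have "(\<lambda>t. if t < s then h0 t else 0) = (\<lambda>t. indicator {0..<s} t * h t)"
      using True by (auto simp: h0_def fun_eq_iff indicator_def)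
    thus ?thesis using True by (simp add: LBINT_as_LINT' g0_def)
  qed (simp add: g0_def)
  show S1: "set_integrable lborel {0..x} (\<lambda>t. h t * (LBINT s=0..t. g s))"
    using F(1) unfolding e1 by (simp add: set_integrable_def)
  show S2: "set_integrable lborel {0..x} (\<lambda>t. g t * (LBINT s=0..t. h s))"
    using F(2) unfolding e2 by (simp add: set_integrable_def)
  have "(LBINT s=0..x. g s) * (LBINT s=0..x. h s) = (LINT s|lborel. g0 s) * (LINT t|lborel. h0 t)"
    using x by (simp add: LBINT_as_LINT g0_def h0_def)
  also have "\<dots> = (LINT t|lborel. indicator {0..x} t * (h t * (LBINT s=0..t. g s)))
                 + (LINT t|lborel. indicator {0..x} t * (g t * (LBINT s=0..t. h s)))"
    using F(3) unfolding e1 e2 .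
  also have "\<dots> = (LINT t:{0..x}|lborel. h t * (LBINT s=0..t. g s))
                 + (LINT t:{0..x}|lborel. g t * (LBINT s=0..t. h s))"
    by (simp add: set_lebesgue_integral_def)
  also have "\<dots> = (LINT t:{0..x}|lborel. h t * (LBINT s=0..t. g s) + g t * (LBINT s=0..t. h s))"
    using S1 S2 by simp
  also have "\<dots> = (LBINT t=0..x. h t * (LBINT s=0..t. g s) + g t * (LBINT s=0..t. h s))"
    using x by (rule LBINT_Icc0[symmetric])
  finally show "(LBINT s=0..x. g s) * (LBINT s=0..x. h s)
          = (LBINT t=0..x. h t * (LBINT s=0..t. g s) + g t * (LBINT s=0..t. h s))" .
qed

lemma set_integrable_cong_on:
  fixes f g :: "real \<Rightarrow> real"
  assumes "set_integrable lborel A f" "\<And>t. t \<in> A \<Longrightarrow> f t = g t"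
  shows "set_integrable lborel A g"
proof -
  have "(\<lambda>t. indicator A t *\<^sub>R f t) = (\<lambda>t. indicator A t *\<^sub>R g t)"
    using assms(2) by (auto simp: fun_eq_iff indicator_def)
  thus ?thesis using assms(1) unfolding set_integrable_def by simp
qed

lemma set_integral_cong_on:
  fixes f g :: "real \<Rightarrow> real"
  assumes "\<And>t. t \<in> A \<Longrightarrow> f t = g t"
  shows "(LINT t:A|lborel. f t) = (LINT t:A|lborel. g t)"
proof -
  have "(\<lambda>t. indicator A t *\<^sub>R f t) = (\<lambda>t. indicator A t *\<^sub>R g t)"
    using assms by (auto simp: fun_eq_iff indicator_def)
  thus ?thesis unfolding set_lebesgue_integral_def by simp
qed

lemma prod_rule:
  fixes g h F G :: "real \<Rightarrow> real"
  assumes x: "0 \<le> x" and g: "set_integrable lborel {0..x} g" and h: "set_integrable lborel {0..x} h"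
    and F: "\<And>t. t \<in> {0..x} \<Longrightarrow> F t = F 0 + (LBINT s=0..t. g s)"
    and G: "\<And>t. t \<in> {0..x} \<Longrightarrow> G t = G 0 + (LBINT s=0..t. h s)"
  shows "set_integrable lborel {0..x} (\<lambda>t. g t * G t + F t * h t)"
    and "F x * G x - F 0 * G 0 = (LBINT t=0..x. g t * G t + F t * h t)"
proof -
  note P = prod_rule_basic[OF x g h]
  define R where "R = (\<lambda>t. G 0 * g t + F 0 * h t + (h t * (LBINT s=0..t. g s) + g t * (LBINT s=0..t. h s)))"
  have eq: "g t * G t + F t * h t = R t" if "t \<in> {0..x}" for t
    using F[OF that] G[OF that] by (simp add: R_def algebra_simps)
  have i1: "set_integrable lborel {0..x} (\<lambda>t. G 0 * g t + F 0 * h t)" using g h by auto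
  have i2: "set_integrable lborel {0..x} (\<lambda>t. h t * (LBINT s=0..t. g s) + g t * (LBINT s=0..t. h s))"
    using P(1,2) by auto
  have iR: "set_integrable lborel {0..x} R" unfolding R_def using i1 i2 by auto
  show "set_integrable lborel {0..x} (\<lambda>t. g t * G t + F t * h t)"
    by (rule set_integrable_cong_on[OF iR]) (simp add: eq)
  have "(LBINT t=0..x. g t * G t + F t * h t) = (LINT t:{0..x}|lborel. g t * G t + F t * h t)"
    by (rule LBINT_Icc0[OF x])
  also have "\<dots> = (LINT t:{0..x}|lborel. R t)"
    by (rule set_integral_cong_on) (rule eq)
  also have "\<dots> = (LINT t:{0..x}|lborel. G 0 * g t + F 0 * h t)
      + (LINT t:{0..x}|lborel. h t * (LBINT s=0..t. g s) + g t * (LBINT s=0..t. h s))"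
    unfolding R_def using i1 i2 by (rule set_integral_add(2))
  also have "(LINT t:{0..x}|lborel. G 0 * g t + F 0 * h t) = G 0 * (LBINT s=0..x. g s) + F 0 * (LBINT s=0..x. h s)"
    using x g h by (simp add: LBINT_Icc0)
  also have "(LINT t:{0..x}|lborel. h t * (LBINT s=0..t. g s) + g t * (LBINT s=0..t. h s))
      = (LBINT s=0..x. g s) * (LBINT s=0..x. h s)"
    using P(3) x by (simp add: LBINT_Icc0)
  finally show "F x * G x - F 0 * G 0 = (LBINT t=0..x. g t * G t + F t * h t)"
    using F[of x] G[of x] x by (simp add: algebra_simps)
qed

lemma LBINT_split:
  fixes p :: "real \<Rightarrow> real" and t T :: real
  assumes p: "set_integrable lborel {0..T} p" and t: "0 \<le> t" "t \<le> T"
  shows "(LBINT s=t..T. p s) = (LBINT s=0..T. p s) - (LBINT s=0..t. p s)"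
proof -
  have "interval_lebesgue_integrable lborel (ereal 0) (ereal T) p"
    unfolding interval_lebesgue_integrable_def using t
    by (auto intro!: set_integrable_subset[OF p])
  hence "(LBINT s=ereal 0..ereal t. p s) + (LBINT s=ereal t..ereal T. p s) = (LBINT s=ereal 0..ereal T. p s)"
    using t by (intro interval_integral_sum) (simp add: min_def max_def)
  thus ?thesis by (simp add: zero_ereal_def algebra_simps)
qed

lemma cos_rep:
  fixes a t :: real
  assumes "0 \<le> t"
  shows "cos (a * t) = cos (a * 0) + (LBINT s=0..t. - a * sin (a * s))"
proof -
  have "(LBINT s=ereal 0..ereal t. - a * sin (a * s)) = cos (a * t) - cos (a * 0)"
    using assms
    by (intro interval_integral_FTC_finite)
       (auto intro!: continuous_intros derivative_eq_intros simp: has_real_derivative_iff_has_vector_derivative[symmetric])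
  thus ?thesis by (simp add: zero_ereal_def)
qed

lemma sin_rep:
  fixes a t :: real
  assumes "0 \<le> t"
  shows "sin (a * t) = sin (a * 0) + (LBINT s=0..t. a * cos (a * s))"
proof -
  have "(LBINT s=ereal 0..ereal t. a * cos (a * s)) = sin (a * t) - sin (a * 0)"
    using assms
    by (intro interval_integral_FTC_finite)
       (auto intro!: continuous_intros derivative_eq_intros simp: has_real_derivative_iff_has_vector_derivative[symmetric])
  thus ?thesis by (simp add: zero_ereal_def)
qed

lemma quad_disc:
  fixes a b c :: real
  assumes "0 \<le> a" "\<And>l. 0 \<le> l^2 * a - 2 * l * c + b"
  shows "c^2 \<le> a * b"
proof (cases "a = 0")
  case True
  have "c = 0"
  proof (rule ccontr)
    assume c: "c \<noteq> 0"
    have "0 \<le> ((b+1)/(2*c))^2 * a - 2 * ((b+1)/(2*c)) * c + b" by (rule assms(2))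
    also have "\<dots> = -1" using c True by (simp add: field_simps)
    finally show False by simp
  qed
  thus ?thesis using True by simp
next
  case False
  hence a: "a > 0" using assms(1) by simp
  have "0 \<le> (c/a)^2 * a - 2 * (c/a) * c + b" by (rule assms(2))
  also have "\<dots> = b - c^2/a" using a by (simp add: field_simps power2_eq_square)
  finally have "c^2/a \<le> b" by simp
  thus ?thesis using a by (simp add: field_simps mult.commute)
qed

lemma CS_int:
  fixes u1 u2 v1 v2 :: "real \<Rightarrow> real"
  assumes m: "set_borel_measurable lborel A u1" "set_borel_measurable lborel A u2"
             "set_borel_measurable lborel A v1" "set_borel_measurable lborel A v2"
    and i: "set_integrable lborel A (\<lambda>t. (u1 t)^2)" "set_integrable lborel A (\<lambda>t. (u2 t)^2)"
           "set_integrable lborel A (\<lambda>t. (v1 t)^2)" "set_integrable lborel A (\<lambda>t. (v2 t)^2)"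
  shows "(LINT t:A|lborel. u1 t * v1 t + u2 t * v2 t)^2
          \<le> (LINT t:A|lborel. (u1 t)^2 + (u2 t)^2) * (LINT t:A|lborel. (v1 t)^2 + (v2 t)^2)"
proof (rule quad_disc)
  have iU: "set_integrable lborel A (\<lambda>t. (u1 t)^2 + (u2 t)^2)" using i by auto
  have iV: "set_integrable lborel A (\<lambda>t. (v1 t)^2 + (v2 t)^2)" using i by auto
  have iC: "set_integrable lborel A (\<lambda>t. u1 t * v1 t + u2 t * v2 t)"
    using sq_int_mult[OF m(1) i(1) m(3) i(3)] sq_int_mult[OF m(2) i(2) m(4) i(4)] by auto
  show "0 \<le> (LINT t:A|lborel. (u1 t)^2 + (u2 t)^2)"
    unfolding set_lebesgue_integral_def by (rule integral_nonneg_AE) auto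
  fix l :: real
  have "0 \<le> (LINT t:A|lborel. (l * u1 t - v1 t)^2 + (l * u2 t - v2 t)^2)"
    unfolding set_lebesgue_integral_def by (rule integral_nonneg_AE) auto
  also have "\<dots> = (LINT t:A|lborel. l^2 * ((u1 t)^2 + (u2 t)^2) - 2 * l * (u1 t * v1 t + u2 t * v2 t)
                      + ((v1 t)^2 + (v2 t)^2))"
    by (rule arg_cong[where f="set_lebesgue_integral lborel A"]) (simp add: fun_eq_iff power2_eq_square algebra_simps)
  also have "\<dots> = l^2 * (LINT t:A|lborel. (u1 t)^2 + (u2 t)^2) - 2 * l * (LINT t:A|lborel. u1 t * v1 t + u2 t * v2 t)
                      + (LINT t:A|lborel. (v1 t)^2 + (v2 t)^2)"
    using iU iV iC by (simp add: set_integral_add set_integral_diff)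
  finally show "0 \<le> l^2 * (LINT t:A|lborel. (u1 t)^2 + (u2 t)^2) - 2 * l * (LINT t:A|lborel. u1 t * v1 t + u2 t * v2 t)
                      + (LINT t:A|lborel. (v1 t)^2 + (v2 t)^2)" .
qed

lemma set_integrable_uminus':
  fixes f :: "real \<Rightarrow> real"
  shows "set_integrable lborel A f \<Longrightarrow> set_integrable lborel A (\<lambda>x. - f x)"
  by (simp add: set_integrable_def)

lemma cont_indef0:
  fixes f :: "real \<Rightarrow> real"
  assumes "set_integrable lborel {0..b} f"
  shows "continuous_on {0..b} (\<lambda>t. LBINT s=0..t. f s)"
  using cont_indef[OF assms] by (simp add: zero_ereal_def)

lemma LBINT_add0:
  fixes f g :: "real \<Rightarrow> real" and t :: real
  assumes "0 \<le> t" "set_integrable lborel {0..t} f" "set_integrable lborel {0..t} g"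
  shows "(LBINT s=0..t. f s) + (LBINT s=0..t. g s) = (LBINT s=0..t. f s + g s)"
  using assms by (simp add: LBINT_Icc0)

lemma LBINT_diff0:
  fixes f g :: "real \<Rightarrow> real" and t :: real
  assumes "0 \<le> t" "set_integrable lborel {0..t} f" "set_integrable lborel {0..t} g"
  shows "(LBINT s=0..t. f s) - (LBINT s=0..t. g s) = (LBINT s=0..t. f s - g s)"
  using assms by (simp add: LBINT_Icc0)

lemma LBINT_cong0:
  fixes f g :: "real \<Rightarrow> real" and t :: real
  assumes "0 \<le> t" "\<And>s. s \<in> {0..t} \<Longrightarrow> f s = g s"
  shows "(LBINT s=0..t. f s) = (LBINT s=0..t. g s)"
proof -
  have "(LBINT s=0..t. f s) = (LINT s:{0..t}|lborel. f s)" by (rule LBINT_Icc0[OF assms(1)])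
  also have "\<dots> = (LINT s:{0..t}|lborel. g s)" by (rule set_integral_cong_on) (rule assms(2))
  also have "\<dots> = (LBINT s=0..t. g s)" by (rule LBINT_Icc0[OF assms(1), symmetric])
  finally show ?thesis .
qed

definition pp :: "real \<Rightarrow> (real \<Rightarrow> real) \<Rightarrow> (real \<Rightarrow> real) \<Rightarrow> real \<Rightarrow> real" where
  "pp a w w' s = cos (a * s) * w' s + a * sin (a * s) * w s"
definition qq :: "real \<Rightarrow> (real \<Rightarrow> real) \<Rightarrow> (real \<Rightarrow> real) \<Rightarrow> real \<Rightarrow> real" where
  "qq a w w' s = sin (a * s) * w' s - a * cos (a * s) * w s"
definition PP :: "real \<Rightarrow> real \<Rightarrow> (real \<Rightarrow> real) \<Rightarrow> (real \<Rightarrow> real) \<Rightarrow> real \<Rightarrow> real" where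
  "PP a T w w' t = (LBINT s=t..T. pp a w w' s)"
definition QQ :: "real \<Rightarrow> real \<Rightarrow> (real \<Rightarrow> real) \<Rightarrow> (real \<Rightarrow> real) \<Rightarrow> real \<Rightarrow> real" where
  "QQ a T w w' t = (LBINT s=t..T. qq a w w' s)"
definition TT :: "real \<Rightarrow> real \<Rightarrow> (real \<Rightarrow> real) \<Rightarrow> (real \<Rightarrow> real) \<Rightarrow> real \<Rightarrow> real" where
  "TT a T w w' t = cos (a * t) * PP a T w w' t + sin (a * t) * QQ a T w w' t"
definition RR :: "real \<Rightarrow> real \<Rightarrow> (real \<Rightarrow> real) \<Rightarrow> (real \<Rightarrow> real) \<Rightarrow> real \<Rightarrow> real" where
  "RR a T w w' t = cos (a * t) * QQ a T w w' t - sin (a * t) * PP a T w w' t"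

lemma H10_facts:
  assumes "H10 T w w'" "0 \<le> T"
  shows "set_borel_measurable lborel {0..T} w'" "set_integrable lborel {0..T} (\<lambda>t. (w' t)^2)"
    "set_integrable lborel {0..T} w'" "continuous_on {0..T} w"
    "\<And>t. t \<in> {0..T} \<Longrightarrow> w t = w 0 + (LBINT s=0..t. w' s)" "w 0 = 0"
proof -
  show m: "set_borel_measurable lborel {0..T} w'" and i2: "set_integrable lborel {0..T} (\<lambda>t. (w' t)^2)"
    using assms(1) by (auto simp: H10_def H1_deriv_def L2_on_def)
  show i: "set_integrable lborel {0..T} w'" by (rule sq_int_imp_int[OF m i2])
  show r: "\<And>t. t \<in> {0..T} \<Longrightarrow> w t = w 0 + (LBINT s=0..t. w' s)"
    using assms(1) by (auto simp: H10_def H1_deriv_def)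
  show w0: "w 0 = 0" using assms(1) by (simp add: H10_def)
  show "continuous_on {0..T} w"
    using cont_indef0[OF i] by (rule continuous_on_cong[THEN iffD1, rotated 2]) (simp_all add: r w0)
qed

lemma W_int:
  assumes "H10 T w w'" "0 \<le> T"
  shows "set_integrable lborel {0..T} (pp a w w')" "set_integrable lborel {0..T} (qq a w w')"
proof -
  note F = H10_facts[OF assms]
  have c1: "set_integrable lborel {0..T} (\<lambda>s. cos (a * s) * w' s)"
    by (rule set_integrable_mult_cont[OF F(3)]) (intro continuous_intros)
  have c2: "set_integrable lborel {0..T} (\<lambda>s. a * sin (a * s) * w s)"
    by (rule borel_integrable_atLeastAtMost') (intro continuous_intros F(4))
  have c3: "set_integrable lborel {0..T} (\<lambda>s. sin (a * s) * w' s)"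
    by (rule set_integrable_mult_cont[OF F(3)]) (intro continuous_intros)
  have c4: "set_integrable lborel {0..T} (\<lambda>s. a * cos (a * s) * w s)"
    by (rule borel_integrable_atLeastAtMost') (intro continuous_intros F(4))
  have "pp a w w' = (\<lambda>s. cos (a * s) * w' s + a * sin (a * s) * w s)" by (simp add: fun_eq_iff pp_def)
  thus "set_integrable lborel {0..T} (pp a w w')" using c1 c2 by simp
  have "qq a w w' = (\<lambda>s. sin (a * s) * w' s - a * cos (a * s) * w s)" by (simp add: fun_eq_iff qq_def)
  thus "set_integrable lborel {0..T} (qq a w w')" using c3 c4 by simp
qed

lemma W_PP:
  assumes "H10 T w w'" "0 \<le> T" "t \<in> {0..T}"
  shows "PP a T w w' t = PP a T w w' 0 + (LBINT s=0..t. - pp a w w' s)"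
    "QQ a T w w' t = QQ a T w w' 0 + (LBINT s=0..t. - qq a w w' s)"
proof -
  have e: "\<And>f. (LBINT s=ereal 0..ereal T. f s) = (LBINT s=0..T. f s)" by (simp add: zero_ereal_def)
  have t: "0 \<le> t" "t \<le> T" using assms(3) by auto
  show "PP a T w w' t = PP a T w w' 0 + (LBINT s=0..t. - pp a w w' s)"
    unfolding PP_def interval_lebesgue_integral_uminus e
    using LBINT_split[OF W_int(1)[OF assms(1,2)] t] by simp
  show "QQ a T w w' t = QQ a T w w' 0 + (LBINT s=0..t. - qq a w w' s)"
    unfolding QQ_def interval_lebesgue_integral_uminus e
    using LBINT_split[OF W_int(2)[OF assms(1,2)] t] by simp
qed

lemma W_cont:
  assumes "H10 T w w'" "0 \<le> T"
  shows "continuous_on {0..T} (PP a T w w')" "continuous_on {0..T} (QQ a T w w')"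
    "continuous_on {0..T} (TT a T w w')" "continuous_on {0..T} (RR a T w w')"
proof -
  have "continuous_on {0..T} (\<lambda>t. PP a T w w' 0 + (LBINT s=0..t. - pp a w w' s))"
    by (intro continuous_intros cont_indef0 set_integrable_uminus' W_int[OF assms])
  thus cP: "continuous_on {0..T} (PP a T w w')"
    by (rule continuous_on_cong[THEN iffD1, rotated 2]) (simp_all add: W_PP(1)[OF assms, symmetric])
  have "continuous_on {0..T} (\<lambda>t. QQ a T w w' 0 + (LBINT s=0..t. - qq a w w' s))"
    by (intro continuous_intros cont_indef0 set_integrable_uminus' W_int[OF assms])
  thus cQ: "continuous_on {0..T} (QQ a T w w')"
    by (rule continuous_on_cong[THEN iffD1, rotated 2]) (simp_all add: W_PP(2)[OF assms, symmetric])
  have "TT a T w w' = (\<lambda>t. cos (a * t) * PP a T w w' t + sin (a * t) * QQ a T w w' t)"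
    by (simp add: fun_eq_iff TT_def)
  thus "continuous_on {0..T} (TT a T w w')" using cP cQ by (simp add: continuous_intros)
  have "RR a T w w' = (\<lambda>t. cos (a * t) * QQ a T w w' t - sin (a * t) * PP a T w w' t)"
    by (simp add: fun_eq_iff RR_def)
  thus "continuous_on {0..T} (RR a T w w')" using cP cQ by (simp add: continuous_intros)
qed

lemma W_rep:
  assumes "H10 T w w'" "0 \<le> T" "t \<in> {0..T}" "a = sqrt \<mu>"
  shows "T_mu T \<mu> w w' t = TT a T w w' t"
proof -
  have tT: "t \<le> T" using assms(3) by simp
  have ip: "set_integrable lborel {t..T} (pp a w w')" "set_integrable lborel {t..T} (qq a w w')"
    using assms(3) by (auto intro!: set_integrable_subset[OF W_int(1)[OF assms(1,2)]] set_integrable_subset[OF W_int(2)[OF assms(1,2)]])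
  have "T_mu T \<mu> w w' t = (LBINT s=t..T. cos (a * t) * pp a w w' s + sin (a * t) * qq a w w' s)"
    unfolding T_mu_def
  proof (rule interval_integral_cong)
    fix s
    show "cos (sqrt \<mu> * (t - s)) * w' s - sqrt \<mu> * sin (sqrt \<mu> * (t - s)) * w s =
          cos (a * t) * pp a w w' s + sin (a * t) * qq a w w' s"
      by (simp add: assms(4)[symmetric] pp_def qq_def right_diff_distrib cos_diff sin_diff algebra_simps)
  qed
  also have "\<dots> = (LINT s:{t..T}|lborel. cos (a * t) * pp a w w' s + sin (a * t) * qq a w w' s)"
    using tT by (rule interval_integral_Icc)
  also have "\<dots> = cos (a * t) * (LINT s:{t..T}|lborel. pp a w w' s) + sin (a * t) * (LINT s:{t..T}|lborel. qq a w w' s)"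
    using ip by simp
  also have "\<dots> = TT a T w w' t"
    using tT by (simp add: TT_def PP_def QQ_def interval_integral_Icc)
  finally show ?thesis .
qed

lemma trig_id1: "cos x * (cos x * y + a * sin x * z) + sin x * (sin x * y - a * cos x * z) = (y::real)"
proof -
  have "cos x * (cos x * y + a * sin x * z) + sin x * (sin x * y - a * cos x * z) = ((sin x)^2 + (cos x)^2) * y"
    by algebra
  thus ?thesis by simp
qed

lemma trig_id2: "sin x * (cos x * y + a * sin x * z) - cos x * (sin x * y - a * cos x * z) = a * (z::real)"
proof -
  have "sin x * (cos x * y + a * sin x * z) - cos x * (sin x * y - a * cos x * z) = ((sin x)^2 + (cos x)^2) * a * z"
    by algebra
  thus ?thesis by simp
qed

lemma pq_id1: "cos (a * s) * pp a w w' s + sin (a * s) * qq a w w' s = w' s"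
  unfolding pp_def qq_def by (rule trig_id1)

lemma pq_id2: "sin (a * s) * pp a w w' s - cos (a * s) * qq a w w' s = a * w s"
  unfolding pp_def qq_def by (rule trig_id2)

lemma W_sub_int:
  assumes "H10 T w w'" "0 \<le> T" "t \<in> {0..T}"
  shows "set_integrable lborel {0..t} (\<lambda>s. - pp a w w' s)" "set_integrable lborel {0..t} (\<lambda>s. - qq a w w' s)"
  using assms(3)
  by (auto intro!: set_integrable_uminus' set_integrable_subset[OF W_int(1)[OF assms(1,2)]]
      set_integrable_subset[OF W_int(2)[OF assms(1,2)]])

lemma W_prods:
  assumes "H10 T w w'" "0 \<le> T" "t \<in> {0..T}"
  shows "cos (a * t) * PP a T w w' t - cos (a * 0) * PP a T w w' 0
          = (LBINT s=0..t. (- a * sin (a * s)) * PP a T w w' s + cos (a * s) * (- pp a w w' s))"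
    "set_integrable lborel {0..t} (\<lambda>s. (- a * sin (a * s)) * PP a T w w' s + cos (a * s) * (- pp a w w' s))"
    "sin (a * t) * QQ a T w w' t - sin (a * 0) * QQ a T w w' 0
          = (LBINT s=0..t. (a * cos (a * s)) * QQ a T w w' s + sin (a * s) * (- qq a w w' s))"
    "set_integrable lborel {0..t} (\<lambda>s. (a * cos (a * s)) * QQ a T w w' s + sin (a * s) * (- qq a w w' s))"
    "cos (a * t) * QQ a T w w' t - cos (a * 0) * QQ a T w w' 0
          = (LBINT s=0..t. (- a * sin (a * s)) * QQ a T w w' s + cos (a * s) * (- qq a w w' s))"
    "set_integrable lborel {0..t} (\<lambda>s. (- a * sin (a * s)) * QQ a T w w' s + cos (a * s) * (- qq a w w' s))"
    "sin (a * t) * PP a T w w' t - sin (a * 0) * PP a T w w' 0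
          = (LBINT s=0..t. (a * cos (a * s)) * PP a T w w' s + sin (a * s) * (- pp a w w' s))"
    "set_integrable lborel {0..t} (\<lambda>s. (a * cos (a * s)) * PP a T w w' s + sin (a * s) * (- pp a w w' s))"
proof -
  have t0: "0 \<le> t" and tT: "t \<le> T" using assms(3) by auto
  note ip = W_sub_int[OF assms]
  have isin: "set_integrable lborel {0..t} (\<lambda>s. - a * sin (a * s))"
    by (rule borel_integrable_atLeastAtMost') (intro continuous_intros)
  have icos: "set_integrable lborel {0..t} (\<lambda>s. a * cos (a * s))"
    by (rule borel_integrable_atLeastAtMost') (intro continuous_intros)
  have Fc: "\<And>s. s \<in> {0..t} \<Longrightarrow> cos (a * s) = cos (a * 0) + (LBINT r=0..s. - a * sin (a * r))"
    by (rule cos_rep) auto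
  have Fs: "\<And>s. s \<in> {0..t} \<Longrightarrow> sin (a * s) = sin (a * 0) + (LBINT r=0..s. a * cos (a * r))"
    by (rule sin_rep) auto
  have GP: "\<And>s. s \<in> {0..t} \<Longrightarrow> PP a T w w' s = PP a T w w' 0 + (LBINT r=0..s. - pp a w w' r)"
    using tT by (intro W_PP(1)[OF assms(1,2)]) auto
  have GQ: "\<And>s. s \<in> {0..t} \<Longrightarrow> QQ a T w w' s = QQ a T w w' 0 + (LBINT r=0..s. - qq a w w' r)"
    using tT by (intro W_PP(2)[OF assms(1,2)]) auto
  note R1 = prod_rule[where x=t and g="\<lambda>s. - a * sin (a * s)" and h="\<lambda>s. - pp a w w' s"
      and F="\<lambda>s. cos (a * s)" and G="PP a T w w'", OF t0 isin ip(1) Fc GP]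
  note R2 = prod_rule[where x=t and g="\<lambda>s. a * cos (a * s)" and h="\<lambda>s. - qq a w w' s"
      and F="\<lambda>s. sin (a * s)" and G="QQ a T w w'", OF t0 icos ip(2) Fs GQ]
  note R3 = prod_rule[where x=t and g="\<lambda>s. - a * sin (a * s)" and h="\<lambda>s. - qq a w w' s"
      and F="\<lambda>s. cos (a * s)" and G="QQ a T w w'", OF t0 isin ip(2) Fc GQ]
  note R4 = prod_rule[where x=t and g="\<lambda>s. a * cos (a * s)" and h="\<lambda>s. - pp a w w' s"
      and F="\<lambda>s. sin (a * s)" and G="PP a T w w'", OF t0 icos ip(1) Fs GP]
  show "cos (a * t) * PP a T w w' t - cos (a * 0) * PP a T w w' 0
          = (LBINT s=0..t. (- a * sin (a * s)) * PP a T w w' s + cos (a * s) * (- pp a w w' s))"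
    "set_integrable lborel {0..t} (\<lambda>s. (- a * sin (a * s)) * PP a T w w' s + cos (a * s) * (- pp a w w' s))"
    "sin (a * t) * QQ a T w w' t - sin (a * 0) * QQ a T w w' 0
          = (LBINT s=0..t. (a * cos (a * s)) * QQ a T w w' s + sin (a * s) * (- qq a w w' s))"
    "set_integrable lborel {0..t} (\<lambda>s. (a * cos (a * s)) * QQ a T w w' s + sin (a * s) * (- qq a w w' s))"
    "cos (a * t) * QQ a T w w' t - cos (a * 0) * QQ a T w w' 0
          = (LBINT s=0..t. (- a * sin (a * s)) * QQ a T w w' s + cos (a * s) * (- qq a w w' s))"
    "set_integrable lborel {0..t} (\<lambda>s. (- a * sin (a * s)) * QQ a T w w' s + cos (a * s) * (- qq a w w' s))"
    "sin (a * t) * PP a T w w' t - sin (a * 0) * PP a T w w' 0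
          = (LBINT s=0..t. (a * cos (a * s)) * PP a T w w' s + sin (a * s) * (- pp a w w' s))"
    "set_integrable lborel {0..t} (\<lambda>s. (a * cos (a * s)) * PP a T w w' s + sin (a * s) * (- pp a w w' s))"
    using R1 R2 R3 R4 by simp_all
qed

lemma W_TT_deriv:
  assumes "H10 T w w'" "0 \<le> T" "t \<in> {0..T}"
  shows "TT a T w w' t = TT a T w w' 0 + (LBINT s=0..t. a * RR a T w w' s - w' s)"
proof -
  have t0: "0 \<le> t" using assms(3) by simp
  note Pr = W_prods[OF assms, where a=a]
  have "TT a T w w' t - TT a T w w' 0 = (cos (a * t) * PP a T w w' t - cos (a * 0) * PP a T w w' 0)
      + (sin (a * t) * QQ a T w w' t - sin (a * 0) * QQ a T w w' 0)"
    unfolding TT_def by algebra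
  also have "\<dots> = (LBINT s=0..t. (- a * sin (a * s)) * PP a T w w' s + cos (a * s) * (- pp a w w' s))
      + (LBINT s=0..t. (a * cos (a * s)) * QQ a T w w' s + sin (a * s) * (- qq a w w' s))"
    by (simp only: Pr(1) Pr(3))
  also have "\<dots> = (LBINT s=0..t. ((- a * sin (a * s)) * PP a T w w' s + cos (a * s) * (- pp a w w' s))
      + ((a * cos (a * s)) * QQ a T w w' s + sin (a * s) * (- qq a w w' s)))"
    by (rule LBINT_add0[OF t0 Pr(2) Pr(4)])
  also have "\<dots> = (LBINT s=0..t. a * RR a T w w' s - w' s)"
  proof (rule LBINT_cong0[OF t0])
    fix s
    have h: "((- a * sin (a * s)) * PP a T w w' s + cos (a * s) * (- pp a w w' s))
      + ((a * cos (a * s)) * QQ a T w w' s + sin (a * s) * (- qq a w w' s))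
      = a * RR a T w w' s - (cos (a * s) * pp a w w' s + sin (a * s) * qq a w w' s)"
      unfolding RR_def by algebra
    show "((- a * sin (a * s)) * PP a T w w' s + cos (a * s) * (- pp a w w' s))
      + ((a * cos (a * s)) * QQ a T w w' s + sin (a * s) * (- qq a w w' s)) = a * RR a T w w' s - w' s"
      unfolding h pq_id1 ..
  qed
  finally show ?thesis by simp
qed

lemma W_RR_deriv:
  assumes "H10 T w w'" "0 \<le> T" "t \<in> {0..T}"
  shows "RR a T w w' t = RR a T w w' 0 + (LBINT s=0..t. a * (w s - TT a T w w' s))"
proof -
  have t0: "0 \<le> t" using assms(3) by simp
  note Pr = W_prods[OF assms, where a=a]
  have "RR a T w w' t - RR a T w w' 0 = (cos (a * t) * QQ a T w w' t - cos (a * 0) * QQ a T w w' 0)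
      - (sin (a * t) * PP a T w w' t - sin (a * 0) * PP a T w w' 0)"
    unfolding RR_def by algebra
  also have "\<dots> = (LBINT s=0..t. (- a * sin (a * s)) * QQ a T w w' s + cos (a * s) * (- qq a w w' s))
      - (LBINT s=0..t. (a * cos (a * s)) * PP a T w w' s + sin (a * s) * (- pp a w w' s))"
    by (simp only: Pr(5) Pr(7))
  also have "\<dots> = (LBINT s=0..t. ((- a * sin (a * s)) * QQ a T w w' s + cos (a * s) * (- qq a w w' s))
      - ((a * cos (a * s)) * PP a T w w' s + sin (a * s) * (- pp a w w' s)))"
    by (rule LBINT_diff0[OF t0 Pr(6) Pr(8)])
  also have "\<dots> = (LBINT s=0..t. a * (w s - TT a T w w' s))"
  proof (rule LBINT_cong0[OF t0])
    fix s
    have h: "((- a * sin (a * s)) * QQ a T w w' s + cos (a * s) * (- qq a w w' s))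
      - ((a * cos (a * s)) * PP a T w w' s + sin (a * s) * (- pp a w w' s))
      = (sin (a * s) * pp a w w' s - cos (a * s) * qq a w w' s) - a * TT a T w w' s"
      unfolding TT_def by algebra
    show "((- a * sin (a * s)) * QQ a T w w' s + cos (a * s) * (- qq a w w' s))
      - ((a * cos (a * s)) * PP a T w w' s + sin (a * s) * (- pp a w w' s)) = a * (w s - TT a T w w' s)"
      unfolding h pq_id2 by (simp add: algebra_simps)
  qed
  finally show ?thesis by simp
qed

lemma W_end: "PP a T w w' T = 0" "QQ a T w w' T = 0" "RR a T w w' T = 0"
  by (simp_all add: PP_def QQ_def RR_def)

definition AA :: "real \<Rightarrow> (real \<Rightarrow> real) \<Rightarrow> real \<Rightarrow> real" where
  "AA a f t = (LBINT s=0..t. cos (a * s) * f s)"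
definition BB :: "real \<Rightarrow> (real \<Rightarrow> real) \<Rightarrow> real \<Rightarrow> real" where
  "BB a f t = (LBINT s=0..t. sin (a * s) * f s)"

lemma F_facts:
  assumes "L2_on T f" "0 \<le> T"
  shows "set_borel_measurable lborel {0..T} f" "set_integrable lborel {0..T} (\<lambda>t. (f t)^2)"
    "set_integrable lborel {0..T} f"
    "set_integrable lborel {0..T} (\<lambda>s. cos (a * s) * f s)" "set_integrable lborel {0..T} (\<lambda>s. sin (a * s) * f s)"
    "continuous_on {0..T} (AA a f)" "continuous_on {0..T} (BB a f)"
    "AA a f 0 = 0" "BB a f 0 = 0"
proof -
  show m: "set_borel_measurable lborel {0..T} f" and i2: "set_integrable lborel {0..T} (\<lambda>t. (f t)^2)"
    using assms(1) by (auto simp: L2_on_def)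
  show i: "set_integrable lborel {0..T} f" by (rule sq_int_imp_int[OF m i2])
  show ic: "set_integrable lborel {0..T} (\<lambda>s. cos (a * s) * f s)"
    by (rule set_integrable_mult_cont[OF i]) (intro continuous_intros)
  show isn: "set_integrable lborel {0..T} (\<lambda>s. sin (a * s) * f s)"
    by (rule set_integrable_mult_cont[OF i]) (intro continuous_intros)
  have "AA a f = (\<lambda>t. LBINT s=0..t. cos (a * s) * f s)" by (simp add: fun_eq_iff AA_def)
  thus "continuous_on {0..T} (AA a f)" using cont_indef0[OF ic] by simp
  have "BB a f = (\<lambda>t. LBINT s=0..t. sin (a * s) * f s)" by (simp add: fun_eq_iff BB_def)
  thus "continuous_on {0..T} (BB a f)" using cont_indef0[OF isn] by simp
  show "AA a f 0 = 0" "BB a f 0 = 0" by (simp_all add: AA_def BB_def zero_ereal_def)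
qed

lemma CS_rep:
  assumes "L2_on T f" "0 \<le> T" "t \<in> {0..T}" "a = sqrt \<mu>"
  shows "Cf \<mu> f t = cos (a * t) * AA a f t + sin (a * t) * BB a f t"
    "Sf \<mu> f t = sin (a * t) * AA a f t - cos (a * t) * BB a f t"
proof -
  note F = F_facts[OF assms(1,2)]
  have t0: "0 \<le> t" using assms(3) by simp
  have ic: "set_integrable lborel {0..t} (\<lambda>s. cos (a * s) * f s)"
    and isn: "set_integrable lborel {0..t} (\<lambda>s. sin (a * s) * f s)"
    using assms(3) by (auto intro!: set_integrable_subset[OF F(4)] set_integrable_subset[OF F(5)])
  have "Cf \<mu> f t = (LBINT s=0..t. cos (a * t) * (cos (a * s) * f s) + sin (a * t) * (sin (a * s) * f s))"
    unfolding Cf_def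
    by (rule LBINT_cong0[OF t0]) (simp add: assms(4)[symmetric] right_diff_distrib cos_diff algebra_simps)
  also have "\<dots> = cos (a * t) * AA a f t + sin (a * t) * BB a f t"
    using ic isn t0 by (simp add: LBINT_Icc0 AA_def BB_def)
  finally show "Cf \<mu> f t = cos (a * t) * AA a f t + sin (a * t) * BB a f t" .
  have "Sf \<mu> f t = (LBINT s=0..t. sin (a * t) * (cos (a * s) * f s) - cos (a * t) * (sin (a * s) * f s))"
    unfolding Sf_def
    by (rule LBINT_cong0[OF t0]) (simp add: assms(4)[symmetric] right_diff_distrib sin_diff algebra_simps)
  also have "\<dots> = sin (a * t) * AA a f t - cos (a * t) * BB a f t"
    using ic isn t0 by (simp add: LBINT_Icc0 AA_def BB_def)
  finally show "Sf \<mu> f t = sin (a * t) * AA a f t - cos (a * t) * BB a f t" .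
qed

lemma part1:
  assumes f: "L2_on T f" and T: "0 \<le> T" and w: "H10 T w w'" and a: "a = sqrt \<mu>"
  shows "(LBINT t=0..T. f t * T_mu T \<mu> w w' t)
       = (LBINT t=0..T. w' t * Cf \<mu> f t + sqrt \<mu> * w t * Sf \<mu> f t)"
    "(LBINT t=0..T. f t * T_mu T \<mu> w w' t) = (LBINT t=0..T. AA a f t * pp a w w' t + BB a f t * qq a w w' t)"
proof -
  note F = F_facts[OF f T]
  note Wi = W_int[OF w T, where a=a]
  have TT: "T \<in> {0..T}" using T by simp
  have GP: "\<And>s. s \<in> {0..T} \<Longrightarrow> PP a T w w' s = PP a T w w' 0 + (LBINT r=0..s. - pp a w w' r)"
    by (rule W_PP(1)[OF w T])
  have GQ: "\<And>s. s \<in> {0..T} \<Longrightarrow> QQ a T w w' s = QQ a T w w' 0 + (LBINT r=0..s. - qq a w w' r)"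
    by (rule W_PP(2)[OF w T])
  have FA: "\<And>s. s \<in> {0..T} \<Longrightarrow> AA a f s = AA a f 0 + (LBINT r=0..s. cos (a * r) * f r)"
    using F(8) by (simp add: AA_def)
  have FB: "\<And>s. s \<in> {0..T} \<Longrightarrow> BB a f s = BB a f 0 + (LBINT r=0..s. sin (a * r) * f r)"
    using F(9) by (simp add: BB_def)
  note R1 = prod_rule[where x=T and g="\<lambda>s. cos (a * s) * f s" and h="\<lambda>s. - pp a w w' s"
      and F="AA a f" and G="PP a T w w'", OF T F(4) set_integrable_uminus'[OF Wi(1)] FA GP]
  note R2 = prod_rule[where x=T and g="\<lambda>s. sin (a * s) * f s" and h="\<lambda>s. - qq a w w' s"
      and F="BB a f" and G="QQ a T w w'", OF T F(5) set_integrable_uminus'[OF Wi(2)] FB GQ]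
  have I3: "set_integrable lborel {0..T} (\<lambda>t. AA a f t * pp a w w' t + BB a f t * qq a w w' t)"
    using set_integrable_mult_cont[OF Wi(1) F(6)] set_integrable_mult_cont[OF Wi(2) F(7)] by simp
  have z1: "(LBINT t=0..T. cos (a * t) * f t * PP a T w w' t + AA a f t * (- pp a w w' t)) = 0"
    using R1(2) by (simp add: W_end F(8))
  have z2: "(LBINT t=0..T. sin (a * t) * f t * QQ a T w w' t + BB a f t * (- qq a w w' t)) = 0"
    using R2(2) by (simp add: W_end F(9))
  have "(LBINT t=0..T. f t * T_mu T \<mu> w w' t)
      = (LBINT t=0..T. ((cos (a * t) * f t * PP a T w w' t + AA a f t * (- pp a w w' t))
          + (sin (a * t) * f t * QQ a T w w' t + BB a f t * (- qq a w w' t)))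
          + (AA a f t * pp a w w' t + BB a f t * qq a w w' t))"
  proof (rule LBINT_cong0[OF T])
    fix s assume s: "s \<in> {0..T}"
    show "f s * T_mu T \<mu> w w' s = ((cos (a * s) * f s * PP a T w w' s + AA a f s * (- pp a w w' s))
          + (sin (a * s) * f s * QQ a T w w' s + BB a f s * (- qq a w w' s)))
          + (AA a f s * pp a w w' s + BB a f s * qq a w w' s)"
      unfolding W_rep[OF w T s a] TT_def by algebra
  qed
  also have "\<dots> = ((LBINT t=0..T. cos (a * t) * f t * PP a T w w' t + AA a f t * (- pp a w w' t))
          + (LBINT t=0..T. sin (a * t) * f t * QQ a T w w' t + BB a f t * (- qq a w w' t)))
          + (LBINT t=0..T. AA a f t * pp a w w' t + BB a f t * qq a w w' t)"
  proof -
    have IXY: "set_integrable lborel {0..T} (\<lambda>t. (cos (a * t) * f t * PP a T w w' t + AA a f t * (- pp a w w' t))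
          + (sin (a * t) * f t * QQ a T w w' t + BB a f t * (- qq a w w' t)))"
      by (rule set_integral_add(1)[OF R1(1) R2(1)])
    show ?thesis
      unfolding LBINT_add0[OF T IXY I3, symmetric] by (subst LBINT_add0[OF T R1(1) R2(1)]) simp_all
  qed
  also have "\<dots> = (LBINT t=0..T. AA a f t * pp a w w' t + BB a f t * qq a w w' t)"
    unfolding z1 z2 by simp
  finally show eq: "(LBINT t=0..T. f t * T_mu T \<mu> w w' t) = (LBINT t=0..T. AA a f t * pp a w w' t + BB a f t * qq a w w' t)" .
  also have "\<dots> = (LBINT t=0..T. w' t * Cf \<mu> f t + sqrt \<mu> * w t * Sf \<mu> f t)"
  proof (rule LBINT_cong0[OF T])
    fix s assume s: "s \<in> {0..T}"
    show "AA a f s * pp a w w' s + BB a f s * qq a w w' s = w' s * Cf \<mu> f s + sqrt \<mu> * w s * Sf \<mu> f s"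
      unfolding CS_rep[OF f T s a] a[symmetric] pp_def qq_def by algebra
  qed
  finally show "(LBINT t=0..T. f t * T_mu T \<mu> w w' t)
       = (LBINT t=0..T. w' t * Cf \<mu> f t + sqrt \<mu> * w t * Sf \<mu> f t)" .
qed

lemma sbm_add:
  fixes f g :: "real \<Rightarrow> real"
  assumes "set_borel_measurable lborel A f" "set_borel_measurable lborel A g"
  shows "set_borel_measurable lborel A (\<lambda>t. f t + g t)" "set_borel_measurable lborel A (\<lambda>t. f t - g t)"
proof -
  have "(\<lambda>x. indicator A x *\<^sub>R (f x + g x)) = (\<lambda>x. (indicator A x *\<^sub>R f x) + (indicator A x *\<^sub>R g x))"
    by (auto simp: indicator_def fun_eq_iff)
  thus "set_borel_measurable lborel A (\<lambda>t. f t + g t)" using assms unfolding set_borel_measurable_def by simp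
  have "(\<lambda>x. indicator A x *\<^sub>R (f x - g x)) = (\<lambda>x. (indicator A x *\<^sub>R f x) - (indicator A x *\<^sub>R g x))"
    by (auto simp: indicator_def fun_eq_iff)
  thus "set_borel_measurable lborel A (\<lambda>t. f t - g t)" using assms unfolding set_borel_measurable_def by simp
qed

lemma CS1:
  fixes u v :: "real \<Rightarrow> real"
  assumes "set_borel_measurable lborel A u" "set_borel_measurable lborel A v"
    "set_integrable lborel A (\<lambda>t. (u t)^2)" "set_integrable lborel A (\<lambda>t. (v t)^2)"
  shows "(LINT t:A|lborel. u t * v t)^2 \<le> (LINT t:A|lborel. (u t)^2) * (LINT t:A|lborel. (v t)^2)"
proof -
  have z: "set_borel_measurable lborel A (\<lambda>t. 0::real)" "set_integrable lborel A (\<lambda>t. (0::real)^2)"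
    by (simp_all add: set_borel_measurable_def set_integrable_def)
  show ?thesis using CS_int[OF assms(1) z(1) assms(2) z(1) assms(3) z(2) assms(4) z(2)] by simp
qed

lemma set_integral_mono_sub:
  fixes g :: "real \<Rightarrow> real"
  assumes "set_integrable lborel B g" "A \<subseteq> B" "A \<in> sets lborel" "\<And>x. 0 \<le> g x"
  shows "(LINT x:A|lborel. g x) \<le> (LINT x:B|lborel. g x)"
  unfolding set_lebesgue_integral_def
proof (rule integral_mono)
  show "integrable lborel (\<lambda>x. indicat_real A x *\<^sub>R g x)"
    using set_integrable_subset[OF assms(1) assms(3) assms(2)] by (simp add: set_integrable_def)
  show "integrable lborel (\<lambda>x. indicat_real B x *\<^sub>R g x)" using assms(1) by (simp add: set_integrable_def)
  show "\<And>x. indicat_real A x *\<^sub>R g x \<le> indicat_real B x *\<^sub>R g x"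
    using assms(2,4) by (auto simp: indicator_def)
qed

lemma part2_pointwise:
  assumes f: "L2_on T f" and T: "0 \<le> T" and t: "t \<in> {0..T}"
  shows "(AA a f t)^2 + (BB a f t)^2 \<le> t * (LBINT s=0..T. (f s)^2)"
proof -
  note F = F_facts[OF f T]
  have t0: "0 \<le> t" using t by simp
  have sub: "{0..t} \<subseteq> {0..T}" using t by auto
  have fm: "set_borel_measurable lborel {0..t} f"
    by (rule set_integrable_sbm, rule set_integrable_subset[OF F(3)]) (use sub in auto)
  have f2: "set_integrable lborel {0..t} (\<lambda>s. (f s)^2)"
    by (rule set_integrable_subset[OF F(2)]) (use sub in auto)
  have cm: "set_borel_measurable lborel {0..t} (\<lambda>s. cos (a * s))"
    by (rule sbm_cont) (intro continuous_intros)
  have sm: "set_borel_measurable lborel {0..t} (\<lambda>s. sin (a * s))"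
    by (rule sbm_cont) (intro continuous_intros)
  have c2: "set_integrable lborel {0..t} (\<lambda>s. (cos (a * s))^2)"
    by (rule borel_integrable_atLeastAtMost') (intro continuous_intros)
  have s2: "set_integrable lborel {0..t} (\<lambda>s. (sin (a * s))^2)"
    by (rule borel_integrable_atLeastAtMost') (intro continuous_intros)
  have A: "(AA a f t)^2 \<le> (LINT s:{0..t}|lborel. (cos (a * s))^2) * (LINT s:{0..t}|lborel. (f s)^2)"
    using CS1[OF cm fm c2 f2] t0 by (simp add: AA_def LBINT_Icc0)
  have B: "(BB a f t)^2 \<le> (LINT s:{0..t}|lborel. (sin (a * s))^2) * (LINT s:{0..t}|lborel. (f s)^2)"
    using CS1[OF sm fm s2 f2] t0 by (simp add: BB_def LBINT_Icc0)
  have one: "(LINT s:{0..t}|lborel. (cos (a * s))^2) + (LINT s:{0..t}|lborel. (sin (a * s))^2) = t"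
  proof -
    have "(LINT s:{0..t}|lborel. (cos (a * s))^2) + (LINT s:{0..t}|lborel. (sin (a * s))^2)
        = (LINT s:{0..t}|lborel. (cos (a * s))^2 + (sin (a * s))^2)"
      by (rule set_integral_add(2)[symmetric, OF c2 s2])
    also have "\<dots> = (LINT s:{0..t}|lborel. 1)" by simp
    also have "\<dots> = (LBINT s=ereal 0..ereal t. 1)" by (rule interval_integral_Icc[OF t0, symmetric])
    also have "\<dots> = t" by simp
    finally show ?thesis .
  qed
  have mono: "(LINT s:{0..t}|lborel. (f s)^2) \<le> (LINT s:{0..T}|lborel. (f s)^2)"
    by (rule set_integral_mono_sub[OF F(2) sub]) auto
  have nn: "0 \<le> (LINT s:{0..t}|lborel. (f s)^2)"
    unfolding set_lebesgue_integral_def by (rule integral_nonneg_AE) auto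
  have "(AA a f t)^2 + (BB a f t)^2 \<le> ((LINT s:{0..t}|lborel. (cos (a * s))^2) + (LINT s:{0..t}|lborel. (sin (a * s))^2))
          * (LINT s:{0..t}|lborel. (f s)^2)"
    using A B by (simp add: distrib_right)
  also have "\<dots> = t * (LINT s:{0..t}|lborel. (f s)^2)" using one by simp
  also have "\<dots> \<le> t * (LINT s:{0..T}|lborel. (f s)^2)" using mono t0 by (simp add: mult_left_mono)
  finally show ?thesis using T by (simp add: LBINT_Icc0)
qed

lemma LBINT_t:
  fixes T N :: real
  assumes "0 \<le> T"
  shows "(LBINT t=0..T. t * N) = T^2 / 2 * N"
proof -
  have "(LBINT t=ereal 0..ereal T. t * N) = T^2 / 2 * N - 0^2 / 2 * N"
    using assms
    by (intro interval_integral_FTC_finite)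
       (auto intro!: continuous_intros derivative_eq_intros simp: has_real_derivative_iff_has_vector_derivative[symmetric])
  thus ?thesis by (simp add: zero_ereal_def)
qed

lemma part2:
  assumes f: "L2_on T f" and T: "0 \<le> T" and a: "a = sqrt \<mu>"
  shows "(LBINT t=0..T. (Cf \<mu> f t)^2 + (Sf \<mu> f t)^2) \<le> T^2 / 2 * (L2_norm T f)^2"
    "set_integrable lborel {0..T} (\<lambda>t. (Cf \<mu> f t)^2)" "set_integrable lborel {0..T} (\<lambda>t. (Sf \<mu> f t)^2)"
    "set_borel_measurable lborel {0..T} (Cf \<mu> f)" "set_borel_measurable lborel {0..T} (Sf \<mu> f)"
proof -
  note F = F_facts[OF f T]
  define N where "N = (LBINT s=0..T. (f s)^2)"
  have Nn: "0 \<le> N" unfolding N_def using T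
    by (simp add: LBINT_Icc0 set_lebesgue_integral_def integral_nonneg_AE)
  have L2: "(L2_norm T f)^2 = N" unfolding L2_norm_def N_def[symmetric] using Nn by simp
  have cC: "continuous_on {0..T} (Cf \<mu> f)"
  proof -
    have "continuous_on {0..T} (\<lambda>t. cos (a * t) * AA a f t + sin (a * t) * BB a f t)"
      by (intro continuous_intros F(6) F(7))
    thus ?thesis by (rule continuous_on_cong[THEN iffD1, rotated 2]) (simp_all add: CS_rep[OF f T _ a])
  qed
  have cS: "continuous_on {0..T} (Sf \<mu> f)"
  proof -
    have "continuous_on {0..T} (\<lambda>t. sin (a * t) * AA a f t - cos (a * t) * BB a f t)"
      by (intro continuous_intros F(6) F(7))
    thus ?thesis by (rule continuous_on_cong[THEN iffD1, rotated 2]) (simp_all add: CS_rep[OF f T _ a])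
  qed
  show "set_integrable lborel {0..T} (\<lambda>t. (Cf \<mu> f t)^2)"
    by (rule borel_integrable_atLeastAtMost') (intro continuous_intros cC)
  show "set_integrable lborel {0..T} (\<lambda>t. (Sf \<mu> f t)^2)"
    by (rule borel_integrable_atLeastAtMost') (intro continuous_intros cS)
  show "set_borel_measurable lborel {0..T} (Cf \<mu> f)" by (rule sbm_cont[OF cC])
  show "set_borel_measurable lborel {0..T} (Sf \<mu> f)" by (rule sbm_cont[OF cS])
  have "(LBINT t=0..T. (Cf \<mu> f t)^2 + (Sf \<mu> f t)^2) = (LBINT t=0..T. (AA a f t)^2 + (BB a f t)^2)"
  proof (rule LBINT_cong0[OF T])
    fix s assume s: "s \<in> {0..T}"
    have "(cos (a * s) * AA a f s + sin (a * s) * BB a f s)^2 + (sin (a * s) * AA a f s - cos (a * s) * BB a f s)^2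
        = ((sin (a * s))^2 + (cos (a * s))^2) * ((AA a f s)^2 + (BB a f s)^2)" by algebra
    thus "(Cf \<mu> f s)^2 + (Sf \<mu> f s)^2 = (AA a f s)^2 + (BB a f s)^2"
      unfolding CS_rep[OF f T s a] by simp
  qed
  also have "\<dots> \<le> (LBINT t=0..T. t * N)"
  proof -
    have i1: "set_integrable lborel {0..T} (\<lambda>t. (AA a f t)^2 + (BB a f t)^2)"
      by (rule borel_integrable_atLeastAtMost') (intro continuous_intros F(6) F(7))
    have i2: "set_integrable lborel {0..T} (\<lambda>t. t * N)"
      by (rule borel_integrable_atLeastAtMost') (intro continuous_intros)
    show ?thesis using T set_integral_mono[OF i1 i2 part2_pointwise[OF f T, unfolded N_def[symmetric]]]
      by (simp add: LBINT_Icc0)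
  qed
  also have "\<dots> = T^2 / 2 * (L2_norm T f)^2" using LBINT_t[OF T] L2 by simp
  finally show "(LBINT t=0..T. (Cf \<mu> f t)^2 + (Sf \<mu> f t)^2) \<le> T^2 / 2 * (L2_norm T f)^2" .
qed

lemma arith_fin:
  fixes X H K T L :: real
  assumes "X^2 \<le> H^2 * K" "K \<le> T^2/2 * L^2" "0 \<le> H" "0 \<le> L" "0 \<le> T"
  shows "X \<le> T / sqrt 2 * L * H"
proof -
  have "H^2 * K \<le> H^2 * (T^2/2 * L^2)" by (rule mult_left_mono) (use assms in auto)
  also have "\<dots> = (T / sqrt 2 * L * H)^2" by (simp add: power_mult_distrib power_divide)
  finally have "X^2 \<le> (T / sqrt 2 * L * H)^2" using assms(1) by linarith
  hence "sqrt (X^2) \<le> sqrt ((T / sqrt 2 * L * H)^2)" by (rule real_sqrt_le_mono)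
  hence "\<bar>X\<bar> \<le> \<bar>T / sqrt 2 * L * H\<bar>" by simp
  moreover have "\<bar>T / sqrt 2 * L * H\<bar> = T / sqrt 2 * L * H" using assms(3-5) by simp
  ultimately show ?thesis by simp
qed

lemma H1norm_sq:
  assumes w: "H10 T w w'" and T: "0 \<le> T" and mu: "0 \<le> \<mu>" and a: "a = sqrt \<mu>"
  shows "(H1mu_norm T \<mu> w w')^2 = (LINT t:{0..T}|lborel. (w' t)^2 + (a * w t)^2)"
    "0 \<le> H1mu_norm T \<mu> w w'"
    "set_integrable lborel {0..T} (\<lambda>t. (a * w t)^2)"
    "set_borel_measurable lborel {0..T} (\<lambda>t. a * w t)"
    "set_integrable lborel {0..T} (\<lambda>t. (w t)^2)"
proof -
  note W = H10_facts[OF w T]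
  have iw: "set_integrable lborel {0..T} (\<lambda>t. (w t)^2)"
    by (rule borel_integrable_atLeastAtMost') (intro continuous_intros W(4))
  thus "set_integrable lborel {0..T} (\<lambda>t. (w t)^2)" .
  show "set_integrable lborel {0..T} (\<lambda>t. (a * w t)^2)"
    by (rule borel_integrable_atLeastAtMost') (intro continuous_intros W(4))
  show "set_borel_measurable lborel {0..T} (\<lambda>t. a * w t)"
    by (rule sbm_cont) (intro continuous_intros W(4))
  have a2: "a^2 = \<mu>" using a mu by simp
  have "(LINT t:{0..T}|lborel. (w' t)^2 + (a * w t)^2) = (LINT t:{0..T}|lborel. (w' t)^2 + \<mu> * (w t)^2)"
    by (rule set_integral_cong_on) (simp add: power_mult_distrib a2)
  also have "\<dots> = (LBINT t=0..T. (w' t)^2) + \<mu> * (LBINT t=0..T. (w t)^2)"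
    using W(2) iw T by (simp add: LBINT_Icc0)
  finally have e: "(LINT t:{0..T}|lborel. (w' t)^2 + (a * w t)^2) = (LBINT t=0..T. (w' t)^2) + \<mu> * (LBINT t=0..T. (w t)^2)" .
  have nn: "0 \<le> (LINT t:{0..T}|lborel. (w' t)^2 + (a * w t)^2)"
    unfolding set_lebesgue_integral_def by (rule integral_nonneg_AE) auto
  show "(H1mu_norm T \<mu> w w')^2 = (LINT t:{0..T}|lborel. (w' t)^2 + (a * w t)^2)"
    unfolding H1mu_norm_def e[symmetric] using nn by simp
  show "0 \<le> H1mu_norm T \<mu> w w'" unfolding H1mu_norm_def e[symmetric] using nn by simp
qed

lemma part3:
  assumes f: "L2_on T f" and T: "0 \<le> T" and w: "H10 T w w'" and mu: "0 \<le> \<mu>"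
  shows "(LBINT t=0..T. f t * T_mu T \<mu> w w' t) \<le> T / sqrt 2 * L2_norm T f * H1mu_norm T \<mu> w w'"
proof -
  define a where "a = sqrt \<mu>"
  note W = H10_facts[OF w T]
  note P2 = part2[OF f T a_def]
  note HN = H1norm_sq[OF w T mu a_def]
  have eX: "(LBINT t=0..T. f t * T_mu T \<mu> w w' t) = (LINT t:{0..T}|lborel. w' t * Cf \<mu> f t + (a * w t) * Sf \<mu> f t)"
    unfolding part1(1)[OF f T w a_def] LBINT_Icc0[OF T] a_def by (simp add: mult.assoc)
  have cs: "(LINT t:{0..T}|lborel. w' t * Cf \<mu> f t + (a * w t) * Sf \<mu> f t)^2
      \<le> (LINT t:{0..T}|lborel. (w' t)^2 + (a * w t)^2) * (LINT t:{0..T}|lborel. (Cf \<mu> f t)^2 + (Sf \<mu> f t)^2)"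
    by (rule CS_int[OF W(1) HN(4) P2(4) P2(5) W(2) HN(3) P2(2) P2(3)])
  have K: "(LINT t:{0..T}|lborel. (Cf \<mu> f t)^2 + (Sf \<mu> f t)^2) \<le> T^2 / 2 * (L2_norm T f)^2"
    using P2(1) unfolding LBINT_Icc0[OF T] .
  have L: "0 \<le> L2_norm T f" unfolding L2_norm_def LBINT_Icc0[OF T]
    by (simp add: set_lebesgue_integral_def integral_nonneg_AE)
  have sq: "(LINT t:{0..T}|lborel. w' t * Cf \<mu> f t + (a * w t) * Sf \<mu> f t)^2
      \<le> (H1mu_norm T \<mu> w w')^2 * (LINT t:{0..T}|lborel. (Cf \<mu> f t)^2 + (Sf \<mu> f t)^2)"
    unfolding HN(1) by (rule cs)
  show ?thesis unfolding eX by (rule arith_fin[OF sq K HN(2) L T])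
qed

lemma part4:
  assumes f: "L2_on T f" and T: "0 \<le> T" and mu: "0 \<le> \<mu>" and u: "H10 T u u'"
    and hyp: "\<forall>w w' v'. H10 T w w' \<and> H1_deriv T (T_mu T \<mu> w w') v' \<longrightarrow>
                 b_mu T \<mu> u u' (T_mu T \<mu> w w') v' = (LBINT t=0..T. f t * T_mu T \<mu> w w' t)"
  shows "H1mu_norm T \<mu> u u' \<le> T / sqrt 2 * L2_norm T f"
proof -
  define a where "a = sqrt \<mu>"
  have a2: "a^2 = \<mu>" using mu by (simp add: a_def)
  note U = H10_facts[OF u T]
  note Wc = W_cont[OF u T, where a=a]
  note HN = H1norm_sq[OF u T mu a_def]
  define v' where "v' = (\<lambda>s. a * RR a T u u' s - u' s)"
  have iRu: "set_integrable lborel {0..T} (\<lambda>t. RR a T u u' t * u' t)"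
    by (rule set_integrable_mult_cont[OF U(3) Wc(4)])
  have L2v: "L2_on T v'"
    unfolding L2_on_def
  proof
    have "set_borel_measurable lborel {0..T} (\<lambda>s. a * RR a T u u' s - u' s)"
      by (rule sbm_add(2)[OF sbm_cont U(1)]) (intro continuous_intros Wc(4))
    thus "set_borel_measurable lborel {0..T} v'" unfolding v'_def .
    have i1: "set_integrable lborel {0..T} (\<lambda>s. (a * RR a T u u' s)^2)"
      by (rule borel_integrable_atLeastAtMost') (intro continuous_intros Wc(4))
    have i2: "set_integrable lborel {0..T} (\<lambda>s. 2 * a * (RR a T u u' s * u' s))"
      using iRu by simp
    have "set_integrable lborel {0..T} (\<lambda>s. (a * RR a T u u' s)^2 - 2 * a * (RR a T u u' s * u' s) + (u' s)^2)"
      using i1 i2 U(2) by simp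
    moreover have "(\<lambda>s. (v' s)^2) = (\<lambda>s. (a * RR a T u u' s)^2 - 2 * a * (RR a T u u' s * u' s) + (u' s)^2)"
      unfolding v'_def fun_eq_iff by algebra
    ultimately show "set_integrable lborel {0..T} (\<lambda>t. (v' t)^2)" by simp
  qed
  have H1: "H1_deriv T (T_mu T \<mu> u u') v'"
    unfolding H1_deriv_def
  proof (intro conjI ballI L2v)
    fix t assume t: "t \<in> {0..T}"
    have z: "(0::real) \<in> {0..T}" using T by simp
    show "T_mu T \<mu> u u' t = T_mu T \<mu> u u' 0 + (LBINT s=0..t. v' s)"
      unfolding W_rep[OF u T t a_def] W_rep[OF u T z a_def] v'_def by (rule W_TT_deriv[OF u T t])
  qed
  have b_eq: "b_mu T \<mu> u u' (T_mu T \<mu> u u') v' = (LBINT t=0..T. f t * T_mu T \<mu> u u' t)"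
    using hyp u H1 by blast
  have ih: "set_integrable lborel {0..T} (\<lambda>s. a * (u s - TT a T u u' s))"
    by (rule borel_integrable_atLeastAtMost') (intro continuous_intros U(4) Wc(3))
  have GR: "\<And>t. t \<in> {0..T} \<Longrightarrow> RR a T u u' t = RR a T u u' 0 + (LBINT s=0..t. a * (u s - TT a T u u' s))"
    by (rule W_RR_deriv[OF u T])
  note PR = prod_rule[where x=T and g=u' and h="\<lambda>s. a * (u s - TT a T u u' s)" and F=u
      and G="RR a T u u'", OF T U(3) ih U(5) GR]
  have z: "(LBINT t=0..T. u' t * RR a T u u' t + u t * (a * (u t - TT a T u u' t))) = 0"
    using PR(2) by (simp add: W_end U(6))
  define E1 where "E1 = (\<lambda>t. (u' t)^2 - a * (RR a T u u' t * u' t) + \<mu> * (u t * TT a T u u' t))"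
  define E2 where "E2 = (\<lambda>t. a * (u' t * RR a T u u' t + u t * (a * (u t - TT a T u u' t))))"
  have iE1: "set_integrable lborel {0..T} E1"
  proof -
    have "set_integrable lborel {0..T} (\<lambda>t. \<mu> * (u t * TT a T u u' t))"
      by (rule borel_integrable_atLeastAtMost') (intro continuous_intros U(4) Wc(3))
    thus ?thesis unfolding E1_def using U(2) iRu by simp
  qed
  have iE2: "set_integrable lborel {0..T} E2"
    unfolding E2_def using PR(1) by simp
  have zE2: "(LBINT t=0..T. E2 t) = 0"
    unfolding E2_def using z T by (simp add: LBINT_Icc0)
  have "b_mu T \<mu> u u' (T_mu T \<mu> u u') v' = (LBINT t=0..T. E1 t)"
    unfolding b_mu_def
  proof (rule LBINT_cong0[OF T])
    fix s assume s: "s \<in> {0..T}"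
    show "- u' s * v' s + \<mu> * u s * T_mu T \<mu> u u' s = E1 s"
      unfolding W_rep[OF u T s a_def] v'_def E1_def by algebra
  qed
  also have "\<dots> = (LBINT t=0..T. E1 t) + (LBINT t=0..T. E2 t)" using zE2 by simp
  also have "\<dots> = (LBINT t=0..T. E1 t + E2 t)" by (rule LBINT_add0[OF T iE1 iE2])
  also have "\<dots> = (LBINT t=0..T. (u' t)^2 + (a * u t)^2)"
  proof (rule LBINT_cong0[OF T])
    fix s
    show "E1 s + E2 s = (u' s)^2 + (a * u s)^2"
      unfolding E1_def E2_def a2[symmetric] by algebra
  qed
  also have "\<dots> = (H1mu_norm T \<mu> u u')^2" unfolding HN(1) LBINT_Icc0[OF T] ..
  finally have Hsq: "(H1mu_norm T \<mu> u u')^2 = (LBINT t=0..T. f t * T_mu T \<mu> u u' t)" using b_eq by simp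
  have le: "(H1mu_norm T \<mu> u u')^2 \<le> T / sqrt 2 * L2_norm T f * H1mu_norm T \<mu> u u'"
    unfolding Hsq by (rule part3[OF f T u mu])
  have L: "0 \<le> L2_norm T f" unfolding L2_norm_def LBINT_Icc0[OF T]
    by (simp add: set_lebesgue_integral_def integral_nonneg_AE)
  show ?thesis
  proof (cases "H1mu_norm T \<mu> u u' = 0")
    case True thus ?thesis using L T by simp
  next
    case False
    hence pos: "0 < H1mu_norm T \<mu> u u'" using HN(2) by simp
    have "H1mu_norm T \<mu> u u' * H1mu_norm T \<mu> u u' \<le> (T / sqrt 2 * L2_norm T f) * H1mu_norm T \<mu> u u'"
      using le by (simp add: power2_eq_square)
    thus ?thesis using pos by (rule mult_right_le_imp_le)
  qed
qed

theorem mainTheorem4: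
  fixes T \<mu> :: real and f :: "real \<Rightarrow> real"
  assumes "T > 0" and "\<mu> > 0" and "L2_on T f"
  shows "(\<forall>w w'. H10 T w w' \<longrightarrow>
            (LBINT t=0..T. f t * T_mu T \<mu> w w' t)
              = (LBINT t=0..T. w' t * Cf \<mu> f t + sqrt \<mu> * w t * Sf \<mu> f t))
    \<and> (LBINT t=0..T. (Cf \<mu> f t)^2 + (Sf \<mu> f t)^2) \<le> T^2 / 2 * (L2_norm T f)^2
    \<and> (\<forall>w w'. H10 T w w' \<longrightarrow>
            (LBINT t=0..T. f t * T_mu T \<mu> w w' t)
              \<le> T / sqrt 2 * L2_norm T f * H1mu_norm T \<mu> w w')
    \<and> (\<forall>u u'. H10 T u u'
          \<and> (\<forall>w w' v'. H10 T w w' \<and> H1_deriv T (T_mu T \<mu> w w') v' \<longrightarrow>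
                 b_mu T \<mu> u u' (T_mu T \<mu> w w') v' = (LBINT t=0..T. f t * T_mu T \<mu> w w' t))
          \<longrightarrow> H1mu_norm T \<mu> u u' \<le> T / sqrt 2 * L2_norm T f)"
proof -
  have T: "0 \<le> T" using assms(1) by simp
  have mu: "0 \<le> \<mu>" using assms(2) by simp
  show ?thesis
    using part1(1)[OF assms(3) T _ refl] part2(1)[OF assms(3) T refl] part3[OF assms(3) T _ mu]
      part4[OF assms(3) T mu]
    by blast
qed

end
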